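(* Let $\lambda_1,\lambda_2,\sigma_1,\sigma_2\in\mathbb{C}^*$ and $\eta_1,\eta_2\in\mathbb{C}$. Then $\Omega(\lambda_1,\eta_1,0,\sigma_1)\otimes\Omega(\lambda_2,\eta_2,0,\sigma_2)$ is an irreducible $\mathcal{G}$-module if and only if $\lambda_1\neq\lambda_2$.
   Context: The planar Galilean conformal algebra $\mathcal{G}$ is the complex Lie algebra with basis $\{L_m,H_m,I_m,J_m\mid m\in\mathbb{Z}\}$ and brackets $[L_m,L_n]=(n-m)L_{m+n}$, $[L_m,H_n]=nH_{m+n}$, $[L_m,I_n]=(n-m)I_{m+n}$, $[L_m,J_n]=(n-m)J_{m+n}$, $[H_m,I_n]=I_{m+n}$, $[H_m,J_n]=-J_{m+n}$, and $[H_m,H_n]=[I_m,I_n]=[J_m,J_n]=[I_m,J_n]=0$ for all $m,n\in\mathbb{Z}$. For $\lambda,\sigma\in\mathbb{C}^*$, $\eta\in\mathbb{C}$, the module $\Omega(\lambda,\eta,0,\sigma)$ is $\mathbb{C}[S,T]$ with $L_m f(S,T)=\lambda^m(T+mS+m\eta)f(S,T-m)$, $H_m f(S,T)=\lambda^m S f(S,T-m)$, $I_m f(S,T)=0$, $J_m f(S,T)=\lambda^m\sigma f(S+1,T-m)$. The tensor product of $\mathcal{G}$-modules has action $x(v\otimes w)=xv\otimes w+v\otimes xw$. *)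

theory Defs
  imports Complex_Main
begin

text \<open>Basis elements of the planar Galilean conformal algebra.\<close>
datatype gca = L int | H int | I int | J int

type_synonym fn2 = "complex \<Rightarrow> complex \<Rightarrow> complex"
type_synonym fn4 = "complex \<Rightarrow> complex \<Rightarrow> complex \<Rightarrow> complex \<Rightarrow> complex"

text \<open>Polynomials in two / four variables over the complex numbers, represented
  (faithfully, since the field is infinite) as polynomial functions.\<close>
definition poly4 :: "fn4 set" where
  "poly4 = {f. \<exists>(F :: (nat \<times> nat \<times> nat \<times> nat) set) (c :: nat \<times> nat \<times> nat \<times> nat \<Rightarrow> complex).
     finite F \<and>
     (\<forall>s1 t1 s2 t2. f s1 t1 s2 t2 =
        (\<Sum>(a,b,a',b')\<in>F. c (a,b,a',b') * s1 ^ a * t1 ^ b * s2 ^ a' * t2 ^ b'))}"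

text \<open>The action of basis elements on Omega(lambda, eta, 0, sigma) = C[S,T].\<close>
fun omega_act :: "complex \<Rightarrow> complex \<Rightarrow> complex \<Rightarrow> gca \<Rightarrow> fn2 \<Rightarrow> fn2" where
  "omega_act lam eta sig (L m) f =
     (\<lambda>S T. lam powi m * (T + of_int m * S + of_int m * eta) * f S (T - of_int m))"
| "omega_act lam eta sig (H m) f = (\<lambda>S T. lam powi m * S * f S (T - of_int m))"
| "omega_act lam eta sig (I m) f = (\<lambda>S T. 0)"
| "omega_act lam eta sig (J m) f = (\<lambda>S T. lam powi m * sig * f (S + 1) (T - of_int m))"

text \<open>Tensor product action on C[S1,T1] \<otimes> C[S2,T2] = C[S1,T1,S2,T2]:
  x(f \<otimes> g) = xf \<otimes> g + f \<otimes> xg, extended linearly.\<close>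
definition tensor_act :: "(gca \<Rightarrow> fn2 \<Rightarrow> fn2) \<Rightarrow> (gca \<Rightarrow> fn2 \<Rightarrow> fn2) \<Rightarrow> gca \<Rightarrow> fn4 \<Rightarrow> fn4" where
  "tensor_act \<rho>1 \<rho>2 x F =
     (\<lambda>s1 t1 s2 t2. \<rho>1 x (\<lambda>s t. F s t s2 t2) s1 t1 + \<rho>2 x (\<lambda>s t. F s1 t1 s t) s2 t2)"

definition zero4 :: fn4 where "zero4 = (\<lambda>s1 t1 s2 t2. 0)"

definition add4 :: "fn4 \<Rightarrow> fn4 \<Rightarrow> fn4" where
  "add4 f g = (\<lambda>s1 t1 s2 t2. f s1 t1 s2 t2 + g s1 t1 s2 t2)"

definition smul4 :: "complex \<Rightarrow> fn4 \<Rightarrow> fn4" where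
  "smul4 c f = (\<lambda>s1 t1 s2 t2. c * f s1 t1 s2 t2)"

definition irreducible_module4 :: "fn4 set \<Rightarrow> (gca \<Rightarrow> fn4 \<Rightarrow> fn4) \<Rightarrow> bool" where
  "irreducible_module4 V act \<longleftrightarrow>
     (\<exists>v\<in>V. v \<noteq> zero4) \<and>
     (\<forall>W. W \<subseteq> V \<and> zero4 \<in> W \<and> (\<forall>u\<in>W. \<forall>w\<in>W. add4 u w \<in> W) \<and>
          (\<forall>c. \<forall>u\<in>W. smul4 c u \<in> W) \<and> (\<forall>x. \<forall>u\<in>W. act x u \<in> W)
        \<longrightarrow> W = {zero4} \<or> W = V)"

end

theory Submission
  imports Defs "HOL-Computational_Algebra.Polynomial_Factorial" "HOL-Computational_Algebra.Field_as_Ring"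
begin


lemma bez:
  fixes a b :: complex
  assumes "a \<noteq> b"
  shows "\<exists>A B. A * [:-a,1:]^n + B * [:-b,1:]^n = 1"
proof -
  have "coprime [:-a,1:] [:-b,1:]"
  proof (rule coprimeI)
    fix c assume "c dvd [:-a,1:]" "c dvd [:-b,1:]"
    then have "c dvd [:-a,1:] - [:-b,1:]" by (rule dvd_diff)
    moreover have "[:-a,1:] - [:-b,1:] = [:b - a:]" by simp
    ultimately have "c dvd [:b-a:]" by simp
    moreover have "is_unit [:b-a:]" using assms by (simp add: is_unit_const_poly_iff dvd_field_iff)
    ultimately show "is_unit c" using dvd_unit_imp_unit by blast
  qed
  then have "coprime ([:-a,1:]^n) ([:-b,1:]^n)" using coprime_power_left_iff[of "[:-a,1:]" n "[:-b,1:]^n"] coprime_power_right_iff[of "[:-a,1:]" "[:-b,1:]" n] by blast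
  then have "gcd ([:-a,1:]^n) ([:-b,1:]^n) = 1" by (rule coprime_imp_gcd_eq_1)
  then show ?thesis using bezout_coefficients_fst_snd[of "[:-a,1:]^n" "[:-b,1:]^n"] by metis
qed


definition app :: "complex poly \<Rightarrow> (int \<Rightarrow> complex) \<Rightarrow> int \<Rightarrow> complex" where
  "app P g m = (\<Sum>i\<le>degree P. coeff P i * g (m + int i))"

lemma app_K:
  assumes "degree P < K"
  shows "app P g m = (\<Sum>i<K. coeff P i * g (m + int i))"
proof -
  have "(\<Sum>i<K. coeff P i * g (m + int i)) = (\<Sum>i\<le>degree P. coeff P i * g (m + int i))"
    using assms by (intro sum.mono_neutral_right) (auto simp: not_le coeff_eq_0)
  then show ?thesis by (simp add: app_def)
qed

lemma app_add: "app (P + Q) g m = app P g m + app Q g m"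
proof -
  define K where "K = Suc (max (degree P) (degree Q))"
  have "degree (P+Q) < K" using degree_add_le_max[of P Q] unfolding K_def by linarith
  moreover have "degree P < K" "degree Q < K" unfolding K_def by auto
  ultimately show ?thesis by (simp add: app_K sum.distrib distrib_right)
qed

lemma app_smult: "app (smult a P) g m = a * app P g m"
  by (cases "a = 0") (simp_all add: app_def sum_distrib_left mult.assoc)

lemma app_zero_poly [simp]: "app 0 g m = 0"
  by (simp add: app_def)

lemma app_one [simp]: "app 1 g m = g m"
  by (simp add: app_def)

lemma app_pCons: "app (pCons a P) g m = a * g m + app P g (m + 1)"
proof -
  define K where "K = Suc (degree P)"
  have d1: "degree (pCons a P) < Suc K" unfolding K_def using degree_pCons_le[of a P] by linarith
  have d2: "degree P < K" unfolding K_def by simp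
  have "app (pCons a P) g m = (\<Sum>i<Suc K. coeff (pCons a P) i * g (m + int i))"
    by (rule app_K[OF d1])
  also have "\<dots> = coeff (pCons a P) 0 * g (m + int 0) + (\<Sum>i<K. coeff (pCons a P) (Suc i) * g (m + int (Suc i)))"
    by (rule sum.lessThan_Suc_shift)
  also have "\<dots> = a * g m + (\<Sum>i<K. coeff P i * g (m + 1 + int i))"
    by (simp add: add_ac)
  also have "\<dots> = a * g m + app P g (m + 1)" by (simp add: app_K[OF d2])
  finally show ?thesis .
qed

lemma app_cong: "(\<And>m. g m = h m) \<Longrightarrow> app P g m = app P h m"
  by (simp add: app_def)

lemma app_lin: "app P (\<lambda>m. a * g m + b * h m) m = a * app P g m + b * app P h m"
  by (simp add: app_def sum.distrib sum_distrib_left algebra_simps)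

lemma app_zero_seq [simp]: "app P (\<lambda>m. 0) m = 0"
  by (simp add: app_def)

lemma app_mult: "app (P * Q) g m = app P (app Q g) m"
proof (induction P arbitrary: m)
  case 0
  then show ?case by simp
next
  case (pCons a P)
  have "pCons a P * Q = smult a Q + pCons 0 (P * Q)" by (rule mult_pCons_left)
  then have "app (pCons a P * Q) g m = a * app Q g m + app (P * Q) g (m + 1)"
    by (simp add: app_add app_smult app_pCons)
  also have "\<dots> = a * app Q g m + app P (app Q g) (m + 1)" using pCons.IH by simp
  also have "\<dots> = app (pCons a P) (app Q g) m" by (simp add: app_pCons)
  finally show ?case .
qed

lemma app_diff: "app (P - Q) g m = app P g m - app Q g m"
proof -
  have "P - Q = P + smult (-1) Q" by simp
  then have "app (P - Q) g m = app P g m + app (smult (-1) Q) g m" by (simp only: app_add)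
  then show ?thesis by (simp only: app_smult) simp
qed

lemma app_lin1: "app [:-c, 1:] g m = g (m + 1) - c * g m"
  by (simp add: app_pCons)

definition delta :: "complex poly \<Rightarrow> complex poly" where
  "delta r = pcompose r [:1,1:] - r"

lemma poly_delta: "poly (delta r) x = poly r (x + 1) - poly r x"
  by (simp add: delta_def poly_pcompose add.commute)

lemma delta_deg: "delta r = 0 \<or> degree (delta r) < degree r"
proof (cases "degree r = 0")
  case True
  then obtain c where "r = [:c:]" by (metis degree_eq_zeroE)
  then show ?thesis by (simp add: delta_def)
next
  case False
  let ?q = "pcompose r [:1,1:]"
  have dq: "degree ?q = degree r" by (simp add: degree_pcompose)
  have lq: "lead_coeff ?q = lead_coeff r" by (simp add: lead_coeff_comp)
  have c0: "coeff (delta r) (degree r) = 0" using dq lq by (simp add: delta_def)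
  have dle: "degree (delta r) \<le> degree r" unfolding delta_def using degree_diff_le[of ?q "degree r" r] dq by simp
  show ?thesis
  proof (rule ccontr)
    assume "\<not> ?thesis"
    then have "delta r \<noteq> 0" "degree (delta r) = degree r" using dle by auto
    then show False using c0 by (metis leading_coeff_0_iff)
  qed
qed

lemma kill:
  fixes lam :: complex
  assumes "lam \<noteq> 0"
  shows "degree r < d \<Longrightarrow> app ([:-lam,1:]^d) (\<lambda>m. lam powi m * poly r (of_int m)) m = 0"
proof (induction d arbitrary: r m)
  case 0
  then show ?case by simp
next
  case (Suc d)
  define r' where "r' = smult lam (delta r)"
  have step: "app [:-lam,1:] (\<lambda>m. lam powi m * poly r (of_int m)) = (\<lambda>m. lam powi m * poly r' (of_int m))"
  proof
    fix m
    show "app [:-lam,1:] (\<lambda>m. lam powi m * poly r (of_int m)) m = lam powi m * poly r' (of_int m)"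
      using assms by (simp add: app_lin1 r'_def poly_delta power_int_add algebra_simps)
  qed
  have "app ([:-lam,1:]^Suc d) (\<lambda>m. lam powi m * poly r (of_int m)) m
      = app ([:-lam,1:]^d) (\<lambda>m. lam powi m * poly r' (of_int m)) m"
    by (simp only: power_Suc2 app_mult step)
  also have "\<dots> = 0"
  proof (cases "delta r = 0")
    case True
    then show ?thesis by (simp add: r'_def)
  next
    case False
    then have "degree (delta r) < degree r" using delta_deg by blast
    then have "degree r' < d" using Suc.prems by (simp add: r'_def)
    then show ?thesis by (rule Suc.IH)
  qed
  finally show ?case .
qed

lemma sep_extract:
  fixes a b :: complex
  assumes "a \<noteq> 0" "b \<noteq> 0" "a \<noteq> b"
  shows "\<exists>Psi. \<forall>(p::complex poly) (q::complex poly) m0. degree p \<le> d \<longrightarrow> degree q \<le> d \<longrightarrow>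
     app Psi (\<lambda>m. a powi m * poly p (of_int m) + b powi m * poly q (of_int m)) m0 = a powi m0 * poly p (of_int m0)"
proof -
  obtain A B where AB: "A * [:-b,1:]^Suc d + B * [:-a,1:]^Suc d = 1"
    using bez[of b a "Suc d"] assms by metis
  define Psi where "Psi = A * [:-b,1:]^Suc d"
  have Psi2: "Psi = 1 - B * [:-a,1:]^Suc d" using AB unfolding Psi_def by (simp add: algebra_simps)
  show ?thesis
  proof (intro exI allI impI)
    fix p q :: "complex poly" and m0 :: int assume dp: "degree p \<le> d" and dq: "degree q \<le> d"
    let ?g1 = "\<lambda>m. a powi m * poly p (of_int m)"
    let ?g2 = "\<lambda>m. b powi m * poly q (of_int m)"
    have k1: "app ([:-a,1:]^Suc d) ?g1 = (\<lambda>m. 0)"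
      using kill[OF assms(1), of p "Suc d"] dp by auto
    have k2: "app ([:-b,1:]^Suc d) ?g2 = (\<lambda>m. 0)"
      using kill[OF assms(2), of q "Suc d"] dq by auto
    have "app Psi (\<lambda>m. ?g1 m + ?g2 m) m0 = app Psi ?g1 m0 + app Psi ?g2 m0"
      using app_lin[of Psi 1 ?g1 1 ?g2 m0] by simp
    also have "app Psi ?g2 m0 = 0" unfolding Psi_def app_mult k2 by simp
    also have "app Psi ?g1 m0 = ?g1 m0"
      unfolding Psi2 app_diff app_mult k1 by simp
    finally show "app Psi (\<lambda>m. ?g1 m + ?g2 m) m0 = ?g1 m0" by simp
  qed
qed



definition mono4 :: "nat \<times> nat \<times> nat \<times> nat \<Rightarrow> fn4" where
  "mono4 k = (\<lambda>s1 t1 s2 t2. case k of (a,b,a',b') \<Rightarrow> s1 ^ a * t1 ^ b * s2 ^ a' * t2 ^ b')"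

lemma poly4_iff: "f \<in> poly4 \<longleftrightarrow> (\<exists>F c. finite F \<and> (\<forall>s1 t1 s2 t2. f s1 t1 s2 t2 = (\<Sum>k\<in>F. c k * mono4 k s1 t1 s2 t2)))"
proof -
  have "\<And>c s1 t1 s2 t2 F. (\<Sum>(a,b,a',b')\<in>F. c (a,b,a',b') * s1 ^ a * t1 ^ b * s2 ^ a' * t2 ^ b')
     = (\<Sum>k\<in>F. c k * mono4 k s1 t1 s2 t2)"
    by (rule sum.cong) (auto simp: mono4_def mult.assoc split: prod.splits)
  then show ?thesis unfolding poly4_def by simp
qed

lemma poly4_gen:
  assumes "finite A"
  shows "(\<lambda>s1 t1 s2 t2. \<Sum>x\<in>A. c x * mono4 (g x) s1 t1 s2 t2) \<in> poly4"
proof -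
  define c' where "c' k = (\<Sum>x\<in>{x\<in>A. g x = k}. c x)" for k
  have "(\<Sum>x\<in>A. c x * mono4 (g x) s1 t1 s2 t2) = (\<Sum>k\<in>g ` A. c' k * mono4 k s1 t1 s2 t2)" for s1 t1 s2 t2
  proof -
    have "(\<Sum>x\<in>A. c x * mono4 (g x) s1 t1 s2 t2) = (\<Sum>k\<in>g ` A. \<Sum>x\<in>{x\<in>A. g x = k}. c x * mono4 (g x) s1 t1 s2 t2)"
      by (rule sum.image_gen[OF assms])
    also have "\<dots> = (\<Sum>k\<in>g ` A. c' k * mono4 k s1 t1 s2 t2)"
      unfolding c'_def sum_distrib_right by (intro sum.cong refl) auto
    finally show ?thesis .
  qed
  then show ?thesis unfolding poly4_iff using assms by blast
qed

lemma mono4_add: "mono4 (a,b,c,d) s1 t1 s2 t2 * mono4 (a',b',c',d') s1 t1 s2 t2 = mono4 (a+a',b+b',c+c',d+d') s1 t1 s2 t2"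
  by (simp add: mono4_def power_add algebra_simps)

lemma poly4_add:
  assumes "f \<in> poly4" "g \<in> poly4"
  shows "(\<lambda>s1 t1 s2 t2. f s1 t1 s2 t2 + g s1 t1 s2 t2) \<in> poly4"
proof -
  obtain F c where F: "finite F" "\<forall>s1 t1 s2 t2. f s1 t1 s2 t2 = (\<Sum>k\<in>F. c k * mono4 k s1 t1 s2 t2)"
    using assms(1) unfolding poly4_iff by blast
  obtain G d where G: "finite G" "\<forall>s1 t1 s2 t2. g s1 t1 s2 t2 = (\<Sum>k\<in>G. d k * mono4 k s1 t1 s2 t2)"
    using assms(2) unfolding poly4_iff by blast
  have fin: "finite (F <+> G)" using F G by simp
  have "(\<lambda>s1 t1 s2 t2. f s1 t1 s2 t2 + g s1 t1 s2 t2) =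
    (\<lambda>s1 t1 s2 t2. \<Sum>x\<in>F <+> G. (case_sum c d x) * mono4 (case_sum id id x) s1 t1 s2 t2)"
    using F G by (simp add: sum.Plus)
  then show ?thesis using poly4_gen[OF fin] by simp
qed

lemma poly4_mult:
  assumes "f \<in> poly4" "g \<in> poly4"
  shows "(\<lambda>s1 t1 s2 t2. f s1 t1 s2 t2 * g s1 t1 s2 t2) \<in> poly4"
proof -
  obtain F c where F: "finite F" "\<forall>s1 t1 s2 t2. f s1 t1 s2 t2 = (\<Sum>k\<in>F. c k * mono4 k s1 t1 s2 t2)"
    using assms(1) unfolding poly4_iff by blast
  obtain G d where G: "finite G" "\<forall>s1 t1 s2 t2. g s1 t1 s2 t2 = (\<Sum>k\<in>G. d k * mono4 k s1 t1 s2 t2)"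
    using assms(2) unfolding poly4_iff by blast
  have fin: "finite (F \<times> G)" using F G by simp
  define pl where "pl = (\<lambda>(k::nat\<times>nat\<times>nat\<times>nat, l::nat\<times>nat\<times>nat\<times>nat). case k of (a,b,a',b') \<Rightarrow> case l of (x,y,x',y') \<Rightarrow> (a+x,b+y,a'+x',b'+y'))"
  have mm: "mono4 k s1 t1 s2 t2 * mono4 l s1 t1 s2 t2 = mono4 (pl (k,l)) s1 t1 s2 t2" for k l s1 t1 s2 t2
    unfolding pl_def by (cases k; cases l) (simp add: mono4_add)
  have "f s1 t1 s2 t2 * g s1 t1 s2 t2 = (\<Sum>x\<in>F \<times> G. (c (fst x) * d (snd x)) * mono4 (pl x) s1 t1 s2 t2)" for s1 t1 s2 t2
  proof -
    have "f s1 t1 s2 t2 * g s1 t1 s2 t2 = (\<Sum>k\<in>F. \<Sum>l\<in>G. (c k * mono4 k s1 t1 s2 t2) * (d l * mono4 l s1 t1 s2 t2))"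
      using F G by (simp add: sum_product)
    also have "\<dots> = (\<Sum>k\<in>F. \<Sum>l\<in>G. (c k * d l) * mono4 (pl (k,l)) s1 t1 s2 t2)"
      by (simp add: mm[symmetric] algebra_simps)
    also have "\<dots> = (\<Sum>x\<in>F \<times> G. (c (fst x) * d (snd x)) * mono4 (pl x) s1 t1 s2 t2)"
      by (simp add: sum.cartesian_product split_def)
    finally show ?thesis .
  qed
  then have "(\<lambda>s1 t1 s2 t2. f s1 t1 s2 t2 * g s1 t1 s2 t2) =
    (\<lambda>s1 t1 s2 t2. \<Sum>x\<in>F \<times> G. (c (fst x) * d (snd x)) * mono4 (pl x) s1 t1 s2 t2)" by simp
  then show ?thesis using poly4_gen[OF fin] by simp
qed

lemma poly4_mono: "(\<lambda>s1 t1 s2 t2. c * mono4 k s1 t1 s2 t2) \<in> poly4"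
  using poly4_gen[of "{()}" "\<lambda>_. c" "\<lambda>_. k"] by simp

lemma poly4_const: "(\<lambda>s1 t1 s2 t2. c) \<in> poly4"
  using poly4_mono[of c "(0,0,0,0)"] by (simp add: mono4_def)
lemma poly4_s1: "(\<lambda>s1 t1 s2 t2. s1) \<in> poly4"
  using poly4_mono[of 1 "(1,0,0,0)"] by (simp add: mono4_def)
lemma poly4_t1: "(\<lambda>s1 t1 s2 t2. t1) \<in> poly4"
  using poly4_mono[of 1 "(0,1,0,0)"] by (simp add: mono4_def)
lemma poly4_s2: "(\<lambda>s1 t1 s2 t2. s2) \<in> poly4"
  using poly4_mono[of 1 "(0,0,1,0)"] by (simp add: mono4_def)
lemma poly4_t2: "(\<lambda>s1 t1 s2 t2. t2) \<in> poly4"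
  using poly4_mono[of 1 "(0,0,0,1)"] by (simp add: mono4_def)

lemma poly4_pow:
  assumes "f \<in> poly4"
  shows "(\<lambda>s1 t1 s2 t2. f s1 t1 s2 t2 ^ n) \<in> poly4"
proof (induction n)
  case 0
  then show ?case using poly4_const[of 1] by simp
next
  case (Suc n)
  then show ?case using poly4_mult[OF assms Suc] by simp
qed

lemma poly4_sum:
  assumes "finite A" "\<And>x. x \<in> A \<Longrightarrow> h x \<in> poly4"
  shows "(\<lambda>s1 t1 s2 t2. \<Sum>x\<in>A. h x s1 t1 s2 t2) \<in> poly4"
  using assms
proof (induction A rule: finite_induct)
  case empty
  then show ?case using poly4_const[of 0] by simp
next
  case (insert x F)
  then show ?case using poly4_add[of "h x" "\<lambda>s1 t1 s2 t2. \<Sum>x\<in>F. h x s1 t1 s2 t2"] by simp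
qed

lemma poly4_comp:
  assumes "f \<in> poly4" "g1 \<in> poly4" "g2 \<in> poly4" "g3 \<in> poly4" "g4 \<in> poly4"
  shows "(\<lambda>s1 t1 s2 t2. f (g1 s1 t1 s2 t2) (g2 s1 t1 s2 t2) (g3 s1 t1 s2 t2) (g4 s1 t1 s2 t2)) \<in> poly4"
proof -
  obtain F c where F: "finite F" "\<forall>s1 t1 s2 t2. f s1 t1 s2 t2 = (\<Sum>k\<in>F. c k * mono4 k s1 t1 s2 t2)"
    using assms(1) unfolding poly4_iff by blast
  have each: "(\<lambda>s1 t1 s2 t2. c k * mono4 k (g1 s1 t1 s2 t2) (g2 s1 t1 s2 t2) (g3 s1 t1 s2 t2) (g4 s1 t1 s2 t2)) \<in> poly4" for k
  proof -
    obtain a b a' b' where k: "k = (a,b,a',b')" by (cases k) auto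
    have "(\<lambda>s1 t1 s2 t2. c k * mono4 k (g1 s1 t1 s2 t2) (g2 s1 t1 s2 t2) (g3 s1 t1 s2 t2) (g4 s1 t1 s2 t2))
      = (\<lambda>s1 t1 s2 t2. (\<lambda>s1 t1 s2 t2. (\<lambda>s1 t1 s2 t2. (\<lambda>s1 t1 s2 t2. c k * g1 s1 t1 s2 t2 ^ a) s1 t1 s2 t2 * g2 s1 t1 s2 t2 ^ b) s1 t1 s2 t2 * g3 s1 t1 s2 t2 ^ a') s1 t1 s2 t2 * g4 s1 t1 s2 t2 ^ b')"
      by (simp add: k mono4_def mult.assoc)
    also have "\<dots> \<in> poly4"
      by (intro poly4_mult poly4_pow poly4_const assms)
    finally show ?thesis .
  qed
  have "(\<lambda>s1 t1 s2 t2. f (g1 s1 t1 s2 t2) (g2 s1 t1 s2 t2) (g3 s1 t1 s2 t2) (g4 s1 t1 s2 t2))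
    = (\<lambda>s1 t1 s2 t2. \<Sum>k\<in>F. (\<lambda>k s1 t1 s2 t2. c k * mono4 k (g1 s1 t1 s2 t2) (g2 s1 t1 s2 t2) (g3 s1 t1 s2 t2) (g4 s1 t1 s2 t2)) k s1 t1 s2 t2)"
    using F by simp
  also have "\<dots> \<in> poly4" by (rule poly4_sum[OF F(1)]) (rule each)
  finally show ?thesis .
qed

lemma poly4_line:
  assumes "f \<in> poly4"
  shows "\<exists>N. \<forall>s1 t1 s2 t2 e1 e2 e3 e4. \<exists>r. degree r \<le> N \<and>
     (\<forall>x. f (s1 + x * e1) (t1 + x * e2) (s2 + x * e3) (t2 + x * e4) = poly r x)"
proof -
  obtain F c where F: "finite F" "\<forall>s1 t1 s2 t2. f s1 t1 s2 t2 = (\<Sum>k\<in>F. c k * mono4 k s1 t1 s2 t2)"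
    using assms(1) unfolding poly4_iff by blast
  define tot where "tot = (\<lambda>k::nat\<times>nat\<times>nat\<times>nat. case k of (a,b,a',b') \<Rightarrow> a+b+a'+b')"
  define N where "N = (\<Sum>k\<in>F. tot k)"
  show ?thesis
  proof (rule exI[of _ N], intro allI)
    fix s1 t1 s2 t2 e1 e2 e3 e4 :: complex
    define mp where "mp = (\<lambda>k::nat\<times>nat\<times>nat\<times>nat. case k of (a,b,a',b') \<Rightarrow>
        [:s1,e1:]^a * [:t1,e2:]^b * [:s2,e3:]^a' * [:t2,e4:]^b')"
    define r where "r = (\<Sum>k\<in>F. smult (c k) (mp k))"
    have dmp: "degree (mp k) \<le> tot k" for k
    proof -
      obtain a b a' b' where k: "k = (a,b,a',b')" by (cases k) auto
      have "degree (mp k) \<le> degree ([:s1,e1:]^a * [:t1,e2:]^b * [:s2,e3:]^a') + degree ([:t2,e4:]^b')"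
        unfolding mp_def k by (simp add: degree_mult_le)
      also have "\<dots> \<le> degree ([:s1,e1:]^a * [:t1,e2:]^b) + degree ([:s2,e3:]^a') + degree ([:t2,e4:]^b')"
        using degree_mult_le by (meson add_right_mono)
      also have "\<dots> \<le> degree ([:s1,e1:]^a) + degree ([:t1,e2:]^b) + degree ([:s2,e3:]^a') + degree ([:t2,e4:]^b')"
        using degree_mult_le by (meson add_right_mono)
      also have "\<dots> \<le> a + b + a' + b'"
      proof -
        have "degree ([:u,v:]^n) \<le> n" for u v :: complex and n
          using degree_power_le[of "[:u,v:]" n] by (simp add: order_trans)
        then show ?thesis by (intro add_mono) auto
      qed
      finally show ?thesis by (simp add: tot_def k)
    qed
    have "degree r \<le> N" unfolding r_def
    proof (rule degree_sum_le[OF F(1)])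
      fix k assume "k \<in> F"
      have "degree (smult (c k) (mp k)) \<le> tot k" using dmp[of k] degree_smult_le[of "c k" "mp k"] by linarith
      also have "tot k \<le> N" unfolding N_def by (rule member_le_sum[OF \<open>k \<in> F\<close> _ F(1)]) simp
      finally show "degree (smult (c k) (mp k)) \<le> N" .
    qed
    moreover have "f (s1 + x * e1) (t1 + x * e2) (s2 + x * e3) (t2 + x * e4) = poly r x" for x
    proof -
      have "poly (mp k) x = mono4 k (s1 + x * e1) (t1 + x * e2) (s2 + x * e3) (t2 + x * e4)" for k
        by (cases k) (simp add: mp_def mono4_def algebra_simps)
      then show ?thesis using F(2) by (simp add: r_def poly_sum)
    qed
    ultimately show "\<exists>r. degree r \<le> N \<and> (\<forall>x. f (s1 + x * e1) (t1 + x * e2) (s2 + x * e3) (t2 + x * e4) = poly r x)"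
      by blast
  qed
qed



lemma poly4_shift:
  assumes "F \<in> poly4"
  shows "(\<lambda>s1 t1 s2 t2. F (s1 + a) (t1 + b) (s2 + c) (t2 + d)) \<in> poly4"
  using poly4_comp[OF assms, of "\<lambda>s1 t1 s2 t2. s1 + a" "\<lambda>s1 t1 s2 t2. t1 + b" "\<lambda>s1 t1 s2 t2. s2 + c" "\<lambda>s1 t1 s2 t2. t2 + d"]
  by (simp add: poly4_add poly4_const poly4_s1 poly4_t1 poly4_s2 poly4_t2)

lemma act_poly4:
  assumes "F \<in> poly4"
  shows "tensor_act (omega_act l1 e1 g1) (omega_act l2 e2 g2) x F \<in> poly4"
proof -
  have sh1: "(\<lambda>s1 t1 s2 t2. F (s1 + a) (t1 - b) s2 t2) \<in> poly4" for a b
    using poly4_shift[OF assms, of a "-b" 0 0] by simp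
  have sh2: "(\<lambda>s1 t1 s2 t2. F s1 t1 (s2 + a) (t2 - b)) \<in> poly4" for a b
    using poly4_shift[OF assms, of 0 0 a "-b"] by simp
  have sh1': "(\<lambda>s1 t1 s2 t2. F s1 (t1 - b) s2 t2) \<in> poly4" for b
    using sh1[of 0 b] by simp
  have sh2': "(\<lambda>s1 t1 s2 t2. F s1 t1 s2 (t2 - b)) \<in> poly4" for b
    using sh2[of 0 b] by simp
  note I = poly4_add poly4_mult poly4_const poly4_s1 poly4_t1 poly4_s2 poly4_t2
  show ?thesis
  proof (cases x)
    case (L m)
    then show ?thesis unfolding tensor_act_def
      by (simp, intro I sh1' sh2')
  next
    case (H m)
    then show ?thesis unfolding tensor_act_def
      by (simp, intro I sh1' sh2')
  next
    case (I m)
    then show ?thesis unfolding tensor_act_def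
      using poly4_const[of 0] by simp
  next
    case (J m)
    then show ?thesis unfolding tensor_act_def
      by (simp, intro I sh1 sh2)
  qed
qed

lemma shift_iter_nat:
  fixes F :: fn4
  assumes h: "\<forall>a b c d. F a (b - 1) c d = F a b c (d - 1)"
  shows "F a (b - of_nat n) c d = F a b c (d - of_nat n)"
proof (induction n arbitrary: b d)
  case 0
  then show ?case by simp
next
  case (Suc n)
  have "F a (b - of_nat (Suc n)) c d = F a ((b - of_nat n) - 1) c d" by (simp add: algebra_simps)
  also have "\<dots> = F a (b - of_nat n) c (d - 1)" using h by blast
  also have "\<dots> = F a b c (d - 1 - of_nat n)" using Suc.IH by blast
  also have "\<dots> = F a b c (d - of_nat (Suc n))" by (simp add: algebra_simps)
  finally show ?case .
qed

lemma shift_iter: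
  fixes F :: fn4
  assumes h: "\<forall>a b c d. F a (b - 1) c d = F a b c (d - 1)"
  shows "F a (b - of_int k) c d = F a b c (d - of_int k)"
proof (cases "k \<ge> 0")
  case True
  then obtain n where "k = int n" by (metis nonneg_int_cases)
  then show ?thesis using shift_iter_nat[OF h] by simp
next
  case False
  then obtain n where k: "k = - int n" by (intro that[of "nat (-k)"]) simp
  have "F a ((b + of_nat n) - of_nat n) c (d + of_nat n) = F a (b + of_nat n) c ((d + of_nat n) - of_nat n)"
    by (rule shift_iter_nat[OF h])
  then show ?thesis using k by simp
qed



lemma reducible:
  fixes l e1 e2 g1 g2 :: complex
  assumes l: "l \<noteq> 0"
  shows "\<not> irreducible_module4 poly4 (tensor_act (omega_act l e1 g1) (omega_act l e2 g2))"
proof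
  let ?act = "tensor_act (omega_act l e1 g1) (omega_act l e2 g2)"
  define W0 where "W0 = {F \<in> poly4. \<forall>a b c d. F a (b - 1) c d = F a b c (d - 1)}"
  assume irr: "irreducible_module4 poly4 ?act"
  have sub: "W0 \<subseteq> poly4" unfolding W0_def by auto
  have z: "zero4 \<in> W0" unfolding W0_def zero4_def using poly4_const[of 0] by simp
  have ad: "\<forall>u\<in>W0. \<forall>w\<in>W0. add4 u w \<in> W0"
    unfolding W0_def add4_def using poly4_add by auto
  have sm: "\<forall>c. \<forall>u\<in>W0. smul4 c u \<in> W0"
    unfolding W0_def smul4_def using poly4_mult[OF poly4_const] by auto
  have ac: "\<forall>x. \<forall>u\<in>W0. ?act x u \<in> W0"
  proof (intro allI ballI)
    fix x u assume u: "u \<in> W0"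
    then have up: "u \<in> poly4" and h: "\<forall>a b c d. u a (b - 1) c d = u a b c (d - 1)"
      unfolding W0_def by auto
    have "\<forall>a b c d. ?act x u a (b - 1) c d = ?act x u a b c (d - 1)"
    proof (intro allI)
      fix a b c d :: complex
      show "?act x u a (b - 1) c d = ?act x u a b c (d - 1)"
      proof (cases x)
        case (L m)
        have h1: "u a (b - of_int m) c (d - 1) = u a b c (d - 1 - of_int m)"
          using shift_iter[OF h, of a b m c "d - 1"] by simp
        have h2: "u a (b - 1) c (d - of_int m) = u a b c (d - 1 - of_int m)"
          using h[rule_format, of a b c "d - of_int m"] by (simp add: algebra_simps)
        have h3: "u a (b - 1 - of_int m) c d = u a (b - 1) c (d - of_int m)"
          using shift_iter[OF h, of a "b - 1" m c d] by simp
        show ?thesis using L h1 h2 h3 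
          by (simp add: tensor_act_def algebra_simps)
      next
        case (H m)
        have h1: "u a (b - 1 - of_int m) c d = u a (b - of_int m) c (d - 1)"
          using h[rule_format, of a "b - of_int m" c d] by (simp add: algebra_simps)
        have h2: "u a (b - 1) c (d - of_int m) = u a b c (d - 1 - of_int m)"
          using h[rule_format, of a b c "d - of_int m"] by (simp add: algebra_simps)
        show ?thesis using H h1 h2
          by (simp add: tensor_act_def algebra_simps)
      next
        case (I m)
        then show ?thesis by (simp add: tensor_act_def)
      next
        case (J m)
        have h1: "u (a + 1) (b - 1 - of_int m) c d = u (a + 1) (b - of_int m) c (d - 1)"
          using h[rule_format, of "a + 1" "b - of_int m" c d] by (simp add: algebra_simps)
        have h2: "u a (b - 1) (c + 1) (d - of_int m) = u a b (c + 1) (d - 1 - of_int m)"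
          using h[rule_format, of a b "c + 1" "d - of_int m"] by (simp add: algebra_simps)
        show ?thesis using J h1 h2
          by (simp add: tensor_act_def algebra_simps)
      qed
    qed
    then show "?act x u \<in> W0" unfolding W0_def using act_poly4[OF up] by auto
  qed
  have one: "(\<lambda>s1 t1 s2 t2. 1) \<in> W0" unfolding W0_def using poly4_const[of 1] by simp
  have "W0 = {zero4} \<or> W0 = poly4" using irr sub z ad sm ac unfolding irreducible_module4_def by blast
  moreover have "W0 \<noteq> {zero4}"
  proof
    assume "W0 = {zero4}"
    then have "(\<lambda>s1 t1 s2 t2. 1::complex) = zero4" using one by auto
    then show False unfolding zero4_def by (metis one_neq_zero)
  qed
  moreover have "W0 \<noteq> poly4"
  proof
    assume "W0 = poly4"
    then have "(\<lambda>s1 t1 s2 t2. t1) \<in> W0" using poly4_t1 by simp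
    then have "(0::complex) - 1 = 0" unfolding W0_def by auto
    then show False by simp
  qed
  ultimately show False by blast
qed



definition subsp :: "fn4 set \<Rightarrow> bool" where
  "subsp W \<longleftrightarrow> zero4 \<in> W \<and> (\<forall>u\<in>W. \<forall>w\<in>W. add4 u w \<in> W) \<and> (\<forall>c. \<forall>u\<in>W. smul4 c u \<in> W)"

lemma lin_comb:
  assumes "subsp W" "finite A" "\<And>i. i \<in> A \<Longrightarrow> h i \<in> W"
  shows "(\<lambda>s1 t1 s2 t2. \<Sum>i\<in>A. c i * h i s1 t1 s2 t2) \<in> W"
  using assms(2,3)
proof (induction A rule: finite_induct)
  case empty
  then show ?case using assms(1) unfolding subsp_def zero4_def by simp
next
  case (insert x F)
  have a: "smul4 (c x) (h x) \<in> W" using assms(1) insert.prems unfolding subsp_def by blast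
  have b: "(\<lambda>s1 t1 s2 t2. \<Sum>i\<in>F. c i * h i s1 t1 s2 t2) \<in> W" using insert by blast
  have "add4 (smul4 (c x) (h x)) (\<lambda>s1 t1 s2 t2. \<Sum>i\<in>F. c i * h i s1 t1 s2 t2) \<in> W"
    using a b assms(1) unfolding subsp_def by blast
  then show ?case using insert.hyps by (simp add: add4_def smul4_def)
qed

lemma smul_in: "subsp W \<Longrightarrow> u \<in> W \<Longrightarrow> (\<lambda>s1 t1 s2 t2. c * u s1 t1 s2 t2) \<in> W"
  unfolding subsp_def smul4_def by blast

lemma diff_in: "subsp W \<Longrightarrow> u \<in> W \<Longrightarrow> w \<in> W \<Longrightarrow> (\<lambda>s1 t1 s2 t2. u s1 t1 s2 t2 - w s1 t1 s2 t2) \<in> W"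
proof -
  assume W: "subsp W" "u \<in> W" "w \<in> W"
  then have "add4 u (smul4 (-1) w) \<in> W" unfolding subsp_def by blast
  then show ?thesis by (simp add: add4_def smul4_def)
qed

lemma vec_extract:
  fixes a b :: complex
  assumes W: "subsp W" and ab: "a \<noteq> 0" "b \<noteq> 0" "a \<noteq> b"
    and X: "\<And>m. X m \<in> W"
    and dec: "\<And>s1 t1 s2 t2. \<exists>p q. degree p \<le> d \<and> degree q \<le> d \<and>
        (\<forall>m. X m s1 t1 s2 t2 = a powi m * poly p (of_int m) + b powi m * poly q (of_int m)) \<and>
        Y s1 t1 s2 t2 = poly p (of_int m0)"
  shows "Y \<in> W"
proof -
  obtain Psi where Psi: "\<forall>(p::complex poly) (q::complex poly) m0. degree p \<le> d \<longrightarrow> degree q \<le> d \<longrightarrow>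
     app Psi (\<lambda>m. a powi m * poly p (of_int m) + b powi m * poly q (of_int m)) m0 = a powi m0 * poly p (of_int m0)"
    using sep_extract[OF ab, of d] by blast
  have Z: "(\<lambda>s1 t1 s2 t2. \<Sum>i\<in>{..degree Psi}. (a powi (-m0) * coeff Psi i) * X (m0 + int i) s1 t1 s2 t2) \<in> W"
    by (rule lin_comb[OF W]) (auto intro: X)
  have "(\<lambda>s1 t1 s2 t2. \<Sum>i\<in>{..degree Psi}. (a powi (-m0) * coeff Psi i) * X (m0 + int i) s1 t1 s2 t2) = Y"
  proof (intro ext)
    fix s1 t1 s2 t2
    obtain p q where pq: "degree p \<le> d" "degree q \<le> d"
        "\<forall>m. X m s1 t1 s2 t2 = a powi m * poly p (of_int m) + b powi m * poly q (of_int m)"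
        "Y s1 t1 s2 t2 = poly p (of_int m0)"
      using dec by blast
    have "(\<Sum>i\<in>{..degree Psi}. (a powi (-m0) * coeff Psi i) * X (m0 + int i) s1 t1 s2 t2)
        = a powi (-m0) * app Psi (\<lambda>m. X m s1 t1 s2 t2) m0"
      by (simp add: app_def sum_distrib_left mult.assoc)
    also have "app Psi (\<lambda>m. X m s1 t1 s2 t2) m0 = app Psi (\<lambda>m. a powi m * poly p (of_int m) + b powi m * poly q (of_int m)) m0"
      using pq(3) by (intro app_cong) simp
    also have "\<dots> = a powi m0 * poly p (of_int m0)" using Psi pq by blast
    finally show "(\<Sum>i\<in>{..degree Psi}. (a powi (-m0) * coeff Psi i) * X (m0 + int i) s1 t1 s2 t2) = Y s1 t1 s2 t2"
      using ab pq(4) by (simp add: power_int_minus field_simps)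
  qed
  then show ?thesis using Z by simp
qed



lemma lines:
  assumes "F \<in> poly4"
  shows "\<exists>N. (\<forall>s1 t1 s2 t2. \<exists>r. degree r \<le> N \<and> (\<forall>x. F s1 (t1 - x) s2 t2 = poly r x)) \<and>
             (\<forall>s1 t1 s2 t2. \<exists>r. degree r \<le> N \<and> (\<forall>x. F s1 t1 s2 (t2 - x) = poly r x))"
proof -
  obtain N where N: "\<forall>s1 t1 s2 t2 e1 e2 e3 e4. \<exists>r. degree r \<le> N \<and>
     (\<forall>x. F (s1 + x * e1) (t1 + x * e2) (s2 + x * e3) (t2 + x * e4) = poly r x)"
    using poly4_line[OF assms] by blast
  have "\<exists>r. degree r \<le> N \<and> (\<forall>x. F s1 (t1 - x) s2 t2 = poly r x)" for s1 t1 s2 t2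
  proof -
    have "\<exists>r. degree r \<le> N \<and> (\<forall>x. F (s1 + x * 0) (t1 + x * -1) (s2 + x * 0) (t2 + x * 0) = poly r x)"
      using N by blast
    then show ?thesis by simp
  qed
  moreover have "\<exists>r. degree r \<le> N \<and> (\<forall>x. F s1 t1 s2 (t2 - x) = poly r x)" for s1 t1 s2 t2
  proof -
    have "\<exists>r. degree r \<le> N \<and> (\<forall>x. F (s1 + x * 0) (t1 + x * 0) (s2 + x * 0) (t2 + x * -1) = poly r x)"
      using N by blast
    then show ?thesis by simp
  qed
  ultimately show ?thesis by blast
qed

context
  fixes l1 l2 e1 e2 g1 g2 :: complex and W :: "fn4 set"
  assumes ne: "l1 \<noteq> 0" "l2 \<noteq> 0" "g1 \<noteq> 0" "g2 \<noteq> 0" "l1 \<noteq> l2"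
    and W: "subsp W" "W \<subseteq> poly4"
    and actW: "\<forall>x. \<forall>u\<in>W. tensor_act (omega_act l1 e1 g1) (omega_act l2 e2 g2) x u \<in> W"
begin

abbreviation "act \<equiv> tensor_act (omega_act l1 e1 g1) (omega_act l2 e2 g2)"

lemma mulS1: assumes F: "F \<in> W" shows "(\<lambda>s1 t1 s2 t2. s1 * F s1 t1 s2 t2) \<in> W"
proof -
  obtain N where N: "\<forall>s1 t1 s2 t2. \<exists>r. degree r \<le> N \<and> (\<forall>x. F s1 (t1 - x) s2 t2 = poly r x)"
     "\<forall>s1 t1 s2 t2. \<exists>r. degree r \<le> N \<and> (\<forall>x. F s1 t1 s2 (t2 - x) = poly r x)"
    using lines F W(2) by blast
  show ?thesis
  proof (rule vec_extract[OF W(1) ne(1,2,5), of "\<lambda>m. act (H m) F" N _ 0])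
    show "act (H m) F \<in> W" for m using actW F by blast
    fix s1 t1 s2 t2
    obtain r1 where r1: "degree r1 \<le> N" "\<forall>x. F s1 (t1 - x) s2 t2 = poly r1 x" using N(1) by blast
    obtain r2 where r2: "degree r2 \<le> N" "\<forall>x. F s1 t1 s2 (t2 - x) = poly r2 x" using N(2) by blast
    show "\<exists>p q. degree p \<le> N \<and> degree q \<le> N \<and>
        (\<forall>m. act (H m) F s1 t1 s2 t2 = l1 powi m * poly p (of_int m) + l2 powi m * poly q (of_int m)) \<and>
        s1 * F s1 t1 s2 t2 = poly p (of_int 0)"
      apply (rule exI[of _ "smult s1 r1"], rule exI[of _ "smult s2 r2"])
      using r1 r2 r1(2)[rule_format, of 0] by (auto simp: tensor_act_def mult_ac intro: order_trans[OF degree_smult_le])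
  qed
qed

lemma mulS2: assumes F: "F \<in> W" shows "(\<lambda>s1 t1 s2 t2. s2 * F s1 t1 s2 t2) \<in> W"
proof -
  obtain N where N: "\<forall>s1 t1 s2 t2. \<exists>r. degree r \<le> N \<and> (\<forall>x. F s1 (t1 - x) s2 t2 = poly r x)"
     "\<forall>s1 t1 s2 t2. \<exists>r. degree r \<le> N \<and> (\<forall>x. F s1 t1 s2 (t2 - x) = poly r x)"
    using lines F W(2) by blast
  have ne': "l2 \<noteq> l1" using ne(5) by simp
  show ?thesis
  proof (rule vec_extract[OF W(1) ne(2,1) ne', of "\<lambda>m. act (H m) F" N _ 0])
    show "act (H m) F \<in> W" for m using actW F by blast
    fix s1 t1 s2 t2
    obtain r1 where r1: "degree r1 \<le> N" "\<forall>x. F s1 (t1 - x) s2 t2 = poly r1 x" using N(1) by blast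
    obtain r2 where r2: "degree r2 \<le> N" "\<forall>x. F s1 t1 s2 (t2 - x) = poly r2 x" using N(2) by blast
    show "\<exists>p q. degree p \<le> N \<and> degree q \<le> N \<and>
        (\<forall>m. act (H m) F s1 t1 s2 t2 = l2 powi m * poly p (of_int m) + l1 powi m * poly q (of_int m)) \<and>
        s2 * F s1 t1 s2 t2 = poly p (of_int 0)"
      apply (rule exI[of _ "smult s2 r2"], rule exI[of _ "smult s1 r1"])
      using r1 r2 r2(2)[rule_format, of 0] by (auto simp: tensor_act_def mult_ac add_ac intro: order_trans[OF degree_smult_le])
  qed
qed

lemma deg_lin: "degree ([:a, b:] * r) \<le> Suc N" if "degree r \<le> N" for a b :: complex and r
proof -
  have "degree ([:a, b:] * r) \<le> degree [:a,b:] + degree r" by (rule degree_mult_le)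
  also have "degree [:a, b:] \<le> 1" by simp
  then show ?thesis using that degree_mult_le[of "[:a,b:]" r] by linarith
qed

lemma mulT1: assumes F: "F \<in> W" shows "(\<lambda>s1 t1 s2 t2. t1 * F s1 t1 s2 t2) \<in> W"
proof -
  obtain N where N: "\<forall>s1 t1 s2 t2. \<exists>r. degree r \<le> N \<and> (\<forall>x. F s1 (t1 - x) s2 t2 = poly r x)"
     "\<forall>s1 t1 s2 t2. \<exists>r. degree r \<le> N \<and> (\<forall>x. F s1 t1 s2 (t2 - x) = poly r x)"
    using lines F W(2) by blast
  show ?thesis
  proof (rule vec_extract[OF W(1) ne(1,2,5), of "\<lambda>m. act (L m) F" "Suc N" _ 0])
    show "act (L m) F \<in> W" for m using actW F by blast
    fix s1 t1 s2 t2
    obtain r1 where r1: "degree r1 \<le> N" "\<forall>x. F s1 (t1 - x) s2 t2 = poly r1 x" using N(1) by blast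
    obtain r2 where r2: "degree r2 \<le> N" "\<forall>x. F s1 t1 s2 (t2 - x) = poly r2 x" using N(2) by blast
    show "\<exists>p q. degree p \<le> Suc N \<and> degree q \<le> Suc N \<and>
        (\<forall>m. act (L m) F s1 t1 s2 t2 = l1 powi m * poly p (of_int m) + l2 powi m * poly q (of_int m)) \<and>
        t1 * F s1 t1 s2 t2 = poly p (of_int 0)"
      apply (rule exI[of _ "[:t1, s1 + e1:] * r1"], rule exI[of _ "[:t2, s2 + e2:] * r2"])
      using r1 r2 r1(2)[rule_format, of 0] deg_lin[OF r1(1)] deg_lin[OF r2(1)]
      by (auto simp: tensor_act_def algebra_simps)
  qed
qed

lemma mulT2: assumes F: "F \<in> W" shows "(\<lambda>s1 t1 s2 t2. t2 * F s1 t1 s2 t2) \<in> W"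
proof -
  obtain N where N: "\<forall>s1 t1 s2 t2. \<exists>r. degree r \<le> N \<and> (\<forall>x. F s1 (t1 - x) s2 t2 = poly r x)"
     "\<forall>s1 t1 s2 t2. \<exists>r. degree r \<le> N \<and> (\<forall>x. F s1 t1 s2 (t2 - x) = poly r x)"
    using lines F W(2) by blast
  have ne': "l2 \<noteq> l1" using ne(5) by simp
  show ?thesis
  proof (rule vec_extract[OF W(1) ne(2,1) ne', of "\<lambda>m. act (L m) F" "Suc N" _ 0])
    show "act (L m) F \<in> W" for m using actW F by blast
    fix s1 t1 s2 t2
    obtain r1 where r1: "degree r1 \<le> N" "\<forall>x. F s1 (t1 - x) s2 t2 = poly r1 x" using N(1) by blast
    obtain r2 where r2: "degree r2 \<le> N" "\<forall>x. F s1 t1 s2 (t2 - x) = poly r2 x" using N(2) by blast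
    show "\<exists>p q. degree p \<le> Suc N \<and> degree q \<le> Suc N \<and>
        (\<forall>m. act (L m) F s1 t1 s2 t2 = l2 powi m * poly p (of_int m) + l1 powi m * poly q (of_int m)) \<and>
        t2 * F s1 t1 s2 t2 = poly p (of_int 0)"
      apply (rule exI[of _ "[:t2, s2 + e2:] * r2"], rule exI[of _ "[:t1, s1 + e1:] * r1"])
      using r1 r2 r2(2)[rule_format, of 0] deg_lin[OF r1(1)] deg_lin[OF r2(1)]
      by (auto simp: tensor_act_def algebra_simps)
  qed
qed

lemma shJ1: assumes F: "F \<in> W" shows "(\<lambda>s1 t1 s2 t2. F (s1 + 1) (t1 - of_int m0) s2 t2) \<in> W"
proof -
  obtain N where N: "\<forall>s1 t1 s2 t2. \<exists>r. degree r \<le> N \<and> (\<forall>x. F s1 (t1 - x) s2 t2 = poly r x)"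
     "\<forall>s1 t1 s2 t2. \<exists>r. degree r \<le> N \<and> (\<forall>x. F s1 t1 s2 (t2 - x) = poly r x)"
    using lines F W(2) by blast
  have "(\<lambda>s1 t1 s2 t2. g1 * F (s1 + 1) (t1 - of_int m0) s2 t2) \<in> W"
  proof (rule vec_extract[OF W(1) ne(1,2,5), of "\<lambda>m. act (J m) F" N _ m0])
    show "act (J m) F \<in> W" for m using actW F by blast
    fix s1 t1 s2 t2
    obtain r1 where r1: "degree r1 \<le> N" "\<forall>x. F (s1 + 1) (t1 - x) s2 t2 = poly r1 x" using N(1) by blast
    obtain r2 where r2: "degree r2 \<le> N" "\<forall>x. F s1 t1 (s2 + 1) (t2 - x) = poly r2 x" using N(2) by blast
    show "\<exists>p q. degree p \<le> N \<and> degree q \<le> N \<and>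
        (\<forall>m. act (J m) F s1 t1 s2 t2 = l1 powi m * poly p (of_int m) + l2 powi m * poly q (of_int m)) \<and>
        g1 * F (s1 + 1) (t1 - of_int m0) s2 t2 = poly p (of_int m0)"
      apply (rule exI[of _ "smult g1 r1"], rule exI[of _ "smult g2 r2"])
      using r1 r2 by (auto simp: tensor_act_def mult_ac intro: order_trans[OF degree_smult_le])
  qed
  from smul_in[OF W(1) this, of "1/g1"] show ?thesis using ne(3) by simp
qed

lemma shJ2: assumes F: "F \<in> W" shows "(\<lambda>s1 t1 s2 t2. F s1 t1 (s2 + 1) (t2 - of_int m0)) \<in> W"
proof -
  obtain N where N: "\<forall>s1 t1 s2 t2. \<exists>r. degree r \<le> N \<and> (\<forall>x. F s1 (t1 - x) s2 t2 = poly r x)"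
     "\<forall>s1 t1 s2 t2. \<exists>r. degree r \<le> N \<and> (\<forall>x. F s1 t1 s2 (t2 - x) = poly r x)"
    using lines F W(2) by blast
  have ne': "l2 \<noteq> l1" using ne(5) by simp
  have "(\<lambda>s1 t1 s2 t2. g2 * F s1 t1 (s2 + 1) (t2 - of_int m0)) \<in> W"
  proof (rule vec_extract[OF W(1) ne(2,1) ne', of "\<lambda>m. act (J m) F" N _ m0])
    show "act (J m) F \<in> W" for m using actW F by blast
    fix s1 t1 s2 t2
    obtain r1 where r1: "degree r1 \<le> N" "\<forall>x. F (s1 + 1) (t1 - x) s2 t2 = poly r1 x" using N(1) by blast
    obtain r2 where r2: "degree r2 \<le> N" "\<forall>x. F s1 t1 (s2 + 1) (t2 - x) = poly r2 x" using N(2) by blast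
    show "\<exists>p q. degree p \<le> N \<and> degree q \<le> N \<and>
        (\<forall>m. act (J m) F s1 t1 s2 t2 = l2 powi m * poly p (of_int m) + l1 powi m * poly q (of_int m)) \<and>
        g2 * F s1 t1 (s2 + 1) (t2 - of_int m0) = poly p (of_int m0)"
      apply (rule exI[of _ "smult g2 r2"], rule exI[of _ "smult g1 r1"])
      using r1 r2 by (auto simp: tensor_act_def mult_ac add_ac intro: order_trans[OF degree_smult_le])
  qed
  from smul_in[OF W(1) this, of "1/g2"] show ?thesis using ne(4) by simp
qed

end


definition dOp :: "complex \<Rightarrow> complex \<Rightarrow> complex \<Rightarrow> complex \<Rightarrow> fn4 \<Rightarrow> fn4" where
  "dOp a b c d F = (\<lambda>s1 t1 s2 t2. F (s1 + a) (t1 + b) (s2 + c) (t2 + d) - F s1 t1 s2 t2)"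

lemma dOp_pow:
  "((dOp a b c d)^^n) F s1 t1 s2 t2 =
     app ([:-1,1:]^n) (\<lambda>m. F (s1 + of_int m * a) (t1 + of_int m * b) (s2 + of_int m * c) (t2 + of_int m * d)) 0"
proof (induction n arbitrary: F)
  case 0
  then show ?case by simp
next
  case (Suc n)
  let ?g = "\<lambda>m. F (s1 + of_int m * a) (t1 + of_int m * b) (s2 + of_int m * c) (t2 + of_int m * d)"
  have "((dOp a b c d)^^Suc n) F s1 t1 s2 t2 = ((dOp a b c d)^^n) (dOp a b c d F) s1 t1 s2 t2"
    by (simp only: funpow_Suc_right o_apply)
  also have "\<dots> = app ([:-1,1:]^n) (\<lambda>m. dOp a b c d F (s1 + of_int m * a) (t1 + of_int m * b) (s2 + of_int m * c) (t2 + of_int m * d)) 0"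
    by (rule Suc.IH)
  also have "\<dots> = app ([:-1,1:]^n) (app [:-1,1:] ?g) 0"
    by (intro app_cong) (simp add: dOp_def app_lin1 algebra_simps)
  also have "\<dots> = app ([:-1,1:]^Suc n) ?g 0"
    by (simp only: power_Suc2 app_mult)
  finally show ?case .
qed

lemma dOp_nil:
  assumes "F \<in> poly4"
  shows "\<exists>n. ((dOp a b c d)^^n) F = zero4"
proof -
  obtain N where N: "\<forall>s1 t1 s2 t2 e1 e2 e3 e4. \<exists>r. degree r \<le> N \<and>
     (\<forall>x. F (s1 + x * e1) (t1 + x * e2) (s2 + x * e3) (t2 + x * e4) = poly r x)"
    using poly4_line[OF assms] by blast
  have "((dOp a b c d)^^Suc N) F s1 t1 s2 t2 = 0" for s1 t1 s2 t2
  proof -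
    obtain r where r: "degree r \<le> N" "\<forall>x. F (s1 + x * a) (t1 + x * b) (s2 + x * c) (t2 + x * d) = poly r x"
      using N by blast
    have "((dOp a b c d)^^Suc N) F s1 t1 s2 t2 = app ([:-1,1:]^Suc N) (\<lambda>m. 1 powi m * poly r (of_int m)) 0"
      unfolding dOp_pow using r(2) by (intro app_cong) simp
    also have "\<dots> = 0" by (rule kill) (use r(1) in auto)
    finally show ?thesis .
  qed
  then show ?thesis unfolding zero4_def by blast
qed

lemma reduce:
  assumes cl: "\<And>F. F \<in> W \<Longrightarrow> Op F \<in> W"
  shows "(Op^^n) G = zero4 \<Longrightarrow> G \<in> W \<Longrightarrow> G \<noteq> zero4 \<Longrightarrow>
    \<exists>k. (Op^^k) G \<in> W \<and> (Op^^k) G \<noteq> zero4 \<and> Op ((Op^^k) G) = zero4"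
proof (induction n arbitrary: G)
  case 0
  then show ?case by simp
next
  case (Suc n)
  show ?case
  proof (cases "Op G = zero4")
    case True
    then show ?thesis using Suc.prems by (intro exI[of _ 0]) simp
  next
    case False
    have fs: "(Op^^Suc j) X = (Op^^j) (Op X)" for j X by (simp only: funpow_Suc_right o_apply)
    have "(Op^^n) (Op G) = zero4" using Suc.prems(1) fs by simp
    then obtain k where k: "(Op^^k) (Op G) \<in> W" "(Op^^k) (Op G) \<noteq> zero4" "Op ((Op^^k) (Op G)) = zero4"
      using Suc.IH[of "Op G"] False cl Suc.prems(2) by blast
    then show ?thesis by (intro exI[of _ "Suc k"]) (simp only: fs, simp)
  qed
qed

lemma dOp_comm: "dOp a b c d (dOp a' b' c' d' F) = dOp a' b' c' d' (dOp a b c d F)"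
  by (simp add: dOp_def fun_eq_iff add_ac algebra_simps)

lemma dOp_comm_pow: "dOp a b c d (((dOp a' b' c' d')^^k) F) = ((dOp a' b' c' d')^^k) (dOp a b c d F)"
proof (induction k)
  case 0
  then show ?case by simp
next
  case (Suc k)
  have "dOp a b c d (((dOp a' b' c' d')^^Suc k) F) = dOp a b c d (dOp a' b' c' d' (((dOp a' b' c' d')^^k) F))"
    by simp
  also have "\<dots> = dOp a' b' c' d' (dOp a b c d (((dOp a' b' c' d')^^k) F))" by (rule dOp_comm)
  also have "\<dots> = ((dOp a' b' c' d')^^Suc k) (dOp a b c d F)" using Suc.IH by simp
  finally show ?case .
qed

lemma dOp_zero: "dOp a b c d zero4 = zero4"
  by (simp add: dOp_def zero4_def)

lemma pow_zero: "((dOp a b c d)^^k) zero4 = zero4"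
  by (induction k) (simp_all add: dOp_zero)

lemma per1:
  fixes h :: "complex \<Rightarrow> complex"
  assumes r: "\<forall>x. h x = poly r x" and per: "\<forall>x. h (x + 1) = h x"
  shows "h y = h 0"
proof -
  have n: "h (of_nat n) = h 0" for n
  proof (induction n)
    case 0
    then show ?case by simp
  next
    case (Suc n)
    have "h (of_nat (Suc n)) = h (of_nat n + 1)" by (simp add: add.commute)
    also have "\<dots> = h (of_nat n)" using per by blast
    finally show ?case using Suc.IH by simp
  qed
  define q where "q = r - [:h 0:]"
  have "range (of_nat :: nat \<Rightarrow> complex) \<subseteq> {x. poly q x = 0}"
    using n r by (auto simp: q_def)
  moreover have "infinite (range (of_nat :: nat \<Rightarrow> complex))"
    using range_inj_infinite[OF inj_of_nat] by simp
  ultimately have "infinite {x. poly q x = 0}" using finite_subset by blast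
  then have "q = 0" using poly_roots_finite by blast
  then have "r = [:h 0:]" by (simp add: q_def)
  then have "poly r y = h 0" by simp
  then show ?thesis using r by simp
qed

lemma const4:
  assumes G: "G \<in> poly4"
    and p1: "\<forall>s1 t1 s2 t2. G (s1 + 1) t1 s2 t2 = G s1 t1 s2 t2"
    and p2: "\<forall>s1 t1 s2 t2. G s1 (t1 + 1) s2 t2 = G s1 t1 s2 t2"
    and p3: "\<forall>s1 t1 s2 t2. G s1 t1 (s2 + 1) t2 = G s1 t1 s2 t2"
    and p4: "\<forall>s1 t1 s2 t2. G s1 t1 s2 (t2 + 1) = G s1 t1 s2 t2"
  shows "G s1 t1 s2 t2 = G 0 0 0 0"
proof -
  obtain N where N: "\<forall>s1 t1 s2 t2 e1 e2 e3 e4. \<exists>r. degree r \<le> N \<and>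
     (\<forall>x. G (s1 + x * e1) (t1 + x * e2) (s2 + x * e3) (t2 + x * e4) = poly r x)"
    using poly4_line[OF G] by blast
  have l1: "\<exists>r. \<forall>x. G x t1 s2 t2 = poly r x" for t1 s2 t2
  proof -
    have "\<exists>r. \<forall>x. G (0 + x * 1) (t1 + x * 0) (s2 + x * 0) (t2 + x * 0) = poly r x" using N by blast
    then show ?thesis by simp
  qed
  have l2: "\<exists>r. \<forall>x. G s1 x s2 t2 = poly r x" for s1 s2 t2
  proof -
    have "\<exists>r. \<forall>x. G (s1 + x * 0) (0 + x * 1) (s2 + x * 0) (t2 + x * 0) = poly r x" using N by blast
    then show ?thesis by simp
  qed
  have l3: "\<exists>r. \<forall>x. G s1 t1 x t2 = poly r x" for s1 t1 t2
  proof -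
    have "\<exists>r. \<forall>x. G (s1 + x * 0) (t1 + x * 0) (0 + x * 1) (t2 + x * 0) = poly r x" using N by blast
    then show ?thesis by simp
  qed
  have l4: "\<exists>r. \<forall>x. G s1 t1 s2 x = poly r x" for s1 t1 s2
  proof -
    have "\<exists>r. \<forall>x. G (s1 + x * 0) (t1 + x * 0) (s2 + x * 0) (0 + x * 1) = poly r x" using N by blast
    then show ?thesis by simp
  qed
  have "G s1 t1 s2 t2 = G 0 t1 s2 t2"
    using l1[of t1 s2 t2] p1 per1[of "\<lambda>x. G x t1 s2 t2"] by blast
  also have "\<dots> = G 0 0 s2 t2"
    using l2[of 0 s2 t2] p2 per1[of "\<lambda>x. G 0 x s2 t2"] by blast
  also have "\<dots> = G 0 0 0 t2"
    using l3[of 0 0 t2] p3 per1[of "\<lambda>x. G 0 0 x t2"] by blast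
  also have "\<dots> = G 0 0 0 0"
    using l4[of 0 0 0] p4 per1[of "\<lambda>x. G 0 0 0 x"] by blast
  finally show ?thesis .
qed



lemma step:
  assumes cl: "\<And>F. F \<in> W \<Longrightarrow> dOp a b c d F \<in> W" and sub: "W \<subseteq> poly4"
    and G: "G \<in> W" "G \<noteq> zero4"
  shows "\<exists>G'. G' \<in> W \<and> G' \<noteq> zero4 \<and> dOp a b c d G' = zero4 \<and>
     (\<forall>a' b' c' d'. dOp a' b' c' d' G = zero4 \<longrightarrow> dOp a' b' c' d' G' = zero4)"
proof -
  obtain n where n: "((dOp a b c d)^^n) G = zero4" using dOp_nil G(1) sub by blast
  obtain k where k: "((dOp a b c d)^^k) G \<in> W" "((dOp a b c d)^^k) G \<noteq> zero4"
      "dOp a b c d (((dOp a b c d)^^k) G) = zero4"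
    using reduce[of W "dOp a b c d", OF cl n G] by blast
  show ?thesis
  proof (intro exI[of _ "((dOp a b c d)^^k) G"] conjI allI impI k)
    fix a' b' c' d' assume "dOp a' b' c' d' G = zero4"
    then show "dOp a' b' c' d' (((dOp a b c d)^^k) G) = zero4"
      by (simp add: dOp_comm_pow pow_zero)
  qed
qed

lemma dOp_zero_pt: "dOp a b c d G = zero4 \<Longrightarrow> G (s1 + a) (t1 + b) (s2 + c) (t2 + d) = G s1 t1 s2 t2"
proof -
  assume "dOp a b c d G = zero4"
  then have "dOp a b c d G s1 t1 s2 t2 = zero4 s1 t1 s2 t2" by simp
  then show ?thesis by (simp add: dOp_def zero4_def)
qed

context
  fixes l1 l2 e1 e2 g1 g2 :: complex and W :: "fn4 set"
  assumes ne: "l1 \<noteq> 0" "l2 \<noteq> 0" "g1 \<noteq> 0" "g2 \<noteq> 0" "l1 \<noteq> l2"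
    and W: "subsp W" "W \<subseteq> poly4"
    and actW: "\<forall>x. \<forall>u\<in>W. tensor_act (omega_act l1 e1 g1) (omega_act l2 e2 g2) x u \<in> W"
begin

lemma powS1: "F \<in> W \<Longrightarrow> (\<lambda>s1 t1 s2 t2. s1 ^ n * F s1 t1 s2 t2) \<in> W"
proof (induction n)
  case 0 then show ?case by simp
next
  case (Suc n)
  then show ?case using mulS1[OF ne W actW Suc.IH[OF Suc.prems]] by (simp add: mult.assoc)
qed

lemma powS2: "F \<in> W \<Longrightarrow> (\<lambda>s1 t1 s2 t2. s2 ^ n * F s1 t1 s2 t2) \<in> W"
proof (induction n)
  case 0 then show ?case by simp
next
  case (Suc n)
  then show ?case using mulS2[OF ne W actW Suc.IH[OF Suc.prems]] by (simp add: mult.assoc)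
qed

lemma powT1: "F \<in> W \<Longrightarrow> (\<lambda>s1 t1 s2 t2. t1 ^ n * F s1 t1 s2 t2) \<in> W"
proof (induction n)
  case 0 then show ?case by simp
next
  case (Suc n)
  then show ?case using mulT1[OF ne W actW Suc.IH[OF Suc.prems]] by (simp add: mult.assoc)
qed

lemma powT2: "F \<in> W \<Longrightarrow> (\<lambda>s1 t1 s2 t2. t2 ^ n * F s1 t1 s2 t2) \<in> W"
proof (induction n)
  case 0 then show ?case by simp
next
  case (Suc n)
  then show ?case using mulT2[OF ne W actW Suc.IH[OF Suc.prems]] by (simp add: mult.assoc)
qed

lemma hard:
  assumes nz: "W \<noteq> {zero4}"
  shows "W = poly4"
proof -
  have z: "zero4 \<in> W" using W(1) unfolding subsp_def by blast
  obtain v0 where v0: "v0 \<in> W" "v0 \<noteq> zero4" using nz z by blast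
  have c1: "dOp 1 0 0 0 F \<in> W" if F: "F \<in> W" for F
  proof -
    have "dOp 1 0 0 0 F = (\<lambda>s1 t1 s2 t2. F (s1 + 1) (t1 - of_int 0) s2 t2 - F s1 t1 s2 t2)"
      by (simp add: dOp_def)
    then show ?thesis using diff_in[OF W(1) shJ1[OF ne W actW F, of 0] F] by simp
  qed
  have c2: "dOp 0 0 1 0 F \<in> W" if F: "F \<in> W" for F
  proof -
    have "dOp 0 0 1 0 F = (\<lambda>s1 t1 s2 t2. F s1 t1 (s2 + 1) (t2 - of_int 0) - F s1 t1 s2 t2)"
      by (simp add: dOp_def)
    then show ?thesis using diff_in[OF W(1) shJ2[OF ne W actW F, of 0] F] by simp
  qed
  have c3: "dOp 1 (-1) 0 0 F \<in> W" if F: "F \<in> W" for F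
  proof -
    have "dOp 1 (-1) 0 0 F = (\<lambda>s1 t1 s2 t2. F (s1 + 1) (t1 - of_int 1) s2 t2 - F s1 t1 s2 t2)"
      by (simp add: dOp_def)
    then show ?thesis using diff_in[OF W(1) shJ1[OF ne W actW F, of 1] F] by simp
  qed
  have c4: "dOp 0 0 1 (-1) F \<in> W" if F: "F \<in> W" for F
  proof -
    have "dOp 0 0 1 (-1) F = (\<lambda>s1 t1 s2 t2. F s1 t1 (s2 + 1) (t2 - of_int 1) - F s1 t1 s2 t2)"
      by (simp add: dOp_def)
    then show ?thesis using diff_in[OF W(1) shJ2[OF ne W actW F, of 1] F] by simp
  qed
  obtain G1 where G1: "G1 \<in> W" "G1 \<noteq> zero4" "dOp 1 0 0 0 G1 = zero4"
    using step[of W 1 0 0 0 v0, OF c1 W(2) v0] by blast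
  obtain G2 where G2: "G2 \<in> W" "G2 \<noteq> zero4" "dOp 0 0 1 0 G2 = zero4" "dOp 1 0 0 0 G2 = zero4"
    using step[of W 0 0 1 0 G1, OF c2 W(2) G1(1,2)] G1(3) by blast
  obtain G3 where G3: "G3 \<in> W" "G3 \<noteq> zero4" "dOp 1 (-1) 0 0 G3 = zero4" "dOp 0 0 1 0 G3 = zero4" "dOp 1 0 0 0 G3 = zero4"
    using step[of W 1 "-1" 0 0 G2, OF c3 W(2) G2(1,2)] G2(3,4) by blast
  obtain G where G: "G \<in> W" "G \<noteq> zero4" "dOp 0 0 1 (-1) G = zero4" "dOp 1 (-1) 0 0 G = zero4"
      "dOp 0 0 1 0 G = zero4" "dOp 1 0 0 0 G = zero4"
    using step[of W 0 0 1 "-1" G3, OF c4 W(2) G3(1,2)] G3(3,4,5) by blast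
  have p1: "\<forall>s1 t1 s2 t2. G (s1 + 1) t1 s2 t2 = G s1 t1 s2 t2"
    using dOp_zero_pt[OF G(6)] by simp
  have p3: "\<forall>s1 t1 s2 t2. G s1 t1 (s2 + 1) t2 = G s1 t1 s2 t2"
    using dOp_zero_pt[OF G(5)] by simp
  have p2: "\<forall>s1 t1 s2 t2. G s1 (t1 + 1) s2 t2 = G s1 t1 s2 t2"
  proof (intro allI)
    fix s1 t1 s2 t2
    have "G (s1 + 1) (t1 + 1 + -1) (s2 + 0) (t2 + 0) = G s1 (t1 + 1) s2 t2" by (rule dOp_zero_pt[OF G(4)])
    then show "G s1 (t1 + 1) s2 t2 = G s1 t1 s2 t2" using p1 by simp
  qed
  have p4: "\<forall>s1 t1 s2 t2. G s1 t1 s2 (t2 + 1) = G s1 t1 s2 t2"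
  proof (intro allI)
    fix s1 t1 s2 t2
    have "G (s1 + 0) (t1 + 0) (s2 + 1) (t2 + 1 + -1) = G s1 t1 s2 (t2 + 1)" by (rule dOp_zero_pt[OF G(3)])
    then show "G s1 t1 s2 (t2 + 1) = G s1 t1 s2 t2" using p3 by simp
  qed
  have Gp: "G \<in> poly4" using G(1) W(2) by blast
  define c where "c = G 0 0 0 0"
  have Gc: "G s1 t1 s2 t2 = c" for s1 t1 s2 t2 unfolding c_def using const4[OF Gp p1 p2 p3 p4] .
  have "c \<noteq> 0"
  proof
    assume "c = 0"
    then have "G = zero4" using Gc by (simp add: zero4_def fun_eq_iff)
    then show False using G(2) by simp
  qed
  have one: "(\<lambda>s1 t1 s2 t2. 1) \<in> W"
    using smul_in[OF W(1) G(1), of "1/c"] Gc \<open>c \<noteq> 0\<close> by simp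
  have mono: "mono4 k \<in> W" for k
  proof -
    obtain a b a' b' where k: "k = (a,b,a',b')" by (cases k) auto
    have "(\<lambda>s1 t1 s2 t2. s1 ^ a * ((\<lambda>s1 t1 s2 t2. t1 ^ b * ((\<lambda>s1 t1 s2 t2. s2 ^ a' * ((\<lambda>s1 t1 s2 t2. t2 ^ b' * 1) s1 t1 s2 t2)) s1 t1 s2 t2)) s1 t1 s2 t2)) \<in> W"
      by (intro powS1 powS2 powT1 powT2 one)
    then show ?thesis by (simp add: k mono4_def mult_ac)
  qed
  show ?thesis
  proof
    show "W \<subseteq> poly4" by (rule W(2))
    show "poly4 \<subseteq> W"
    proof
      fix f assume "f \<in> poly4"
      then obtain F cf where F: "finite F" "\<forall>s1 t1 s2 t2. f s1 t1 s2 t2 = (\<Sum>k\<in>F. cf k * mono4 k s1 t1 s2 t2)"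
        unfolding poly4_iff by blast
      have "(\<lambda>s1 t1 s2 t2. \<Sum>k\<in>F. cf k * mono4 k s1 t1 s2 t2) \<in> W"
        by (rule lin_comb[OF W(1) F(1)]) (rule mono)
      moreover have "f = (\<lambda>s1 t1 s2 t2. \<Sum>k\<in>F. cf k * mono4 k s1 t1 s2 t2)" using F(2) by (simp add: fun_eq_iff)
      ultimately show "f \<in> W" by simp
    qed
  qed
qed

end

theorem theorem4p6:
  fixes lam1 lam2 sig1 sig2 eta1 eta2 :: complex
  assumes "lam1 \<noteq> 0" and "lam2 \<noteq> 0" and "sig1 \<noteq> 0" and "sig2 \<noteq> 0"
  shows "irreducible_module4 poly4
           (tensor_act (omega_act lam1 eta1 sig1) (omega_act lam2 eta2 sig2))
         \<longleftrightarrow> lam1 \<noteq> lam2"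
proof
  assume irr: "irreducible_module4 poly4 (tensor_act (omega_act lam1 eta1 sig1) (omega_act lam2 eta2 sig2))"
  show "lam1 \<noteq> lam2"
  proof
    assume "lam1 = lam2"
    then show False using reducible[OF assms(1), of eta1 sig1 eta2 sig2] irr by simp
  qed
next
  assume neq: "lam1 \<noteq> lam2"
  show "irreducible_module4 poly4 (tensor_act (omega_act lam1 eta1 sig1) (omega_act lam2 eta2 sig2))"
    unfolding irreducible_module4_def
  proof (intro conjI allI impI)
    have "(\<lambda>s1 t1 s2 t2. 1) \<in> poly4" by (rule poly4_const)
    moreover have "(\<lambda>s1 t1 s2 t2. 1::complex) \<noteq> zero4" by (simp add: zero4_def fun_eq_iff)
    ultimately show "\<exists>v\<in>poly4. v \<noteq> zero4" by blast
  next
    fix W assume H: "W \<subseteq> poly4 \<and> zero4 \<in> W \<and> (\<forall>u\<in>W. \<forall>w\<in>W. add4 u w \<in> W) \<and>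
          (\<forall>c. \<forall>u\<in>W. smul4 c u \<in> W) \<and>
          (\<forall>x. \<forall>u\<in>W. tensor_act (omega_act lam1 eta1 sig1) (omega_act lam2 eta2 sig2) x u \<in> W)"
    then have S: "subsp W" unfolding subsp_def by blast
    show "W = {zero4} \<or> W = poly4"
      using hard[OF assms neq S] H by blast
  qed
qed

end
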